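(* Let $n \geq 1$ and consider sites $v_1,\ldots,v_n$ with uplink capacities $C_u(v_k)>0$ and downlink capacities $C_d(v_k)>0$, and client data streams $s_1,\ldots,s_n$ with rates $R_1,\ldots,R_n>0$ that are sustainable, i.e. (1) $R_i \leq C_u(v_i)$ for every $i$; (2) $\sum_{j\neq i} R_j \leq C_d(v_i)$ for every $i$; (3) $(n-1)\sum_{i=1}^n R_i \leq \sum_{i=1}^n C_u(v_i)$. Then there exists a partitioning scheme for each client data stream, i.e. nonnegative reals $r_{i,j}$ ($1\le i,j\le n$) with $\sum_{j=1}^n r_{i,j}=R_i$ for every $i$, together with, for every pair $(i,j)$, a broadcast tree $T_{i,j}$ for the sub-stream $s_{i,j}$ (a rooted spanning tree on $\{v_1,\ldots,v_n\}$ with root $v_i$), such that: (a) each sub-stream can be broadcast at its rate without violating downlink and uplink bandwidth constraints at any site, i.e. for every $k$, $$\sum_{i=1}^n\sum_{j=1}^n r_{i,j}\, c_{T_{i,j}}(v_k) \leq C_u(v_k) \quad\text{and}\quad \sum_{i\neq k}\sum_{j=1}^n r_{i,j} \leq C_d(v_k),$$ where $c_T(u)$ denotes the number of children of $u$ in the rooted tree $T$; (b) the height of each tree $T_{i,j}$ is at most $2$.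
   Context: Network model: $n$ sites $v_1,\ldots,v_n$ are pairwise connected through a congestion-free core (complete graph); each site $v$ has an uplink bandwidth $C_u(v)>0$ and a downlink bandwidth $C_d(v)>0$. A unicast transmission at rate $r$ from one site to another consumes $r$ of the sender's uplink bandwidth and $r$ of the receiver's downlink bandwidth; these are shared among all transmissions involving the site. Site $v_i$ has a client data stream $s_i$ of rate $R_i$ that must be received by all other sites; the client stream arriving at $v_i$ does not consume $v_i$'s downlink bandwidth. Rates can be split at any granularity: a partitioning scheme splits $s_i$ into $n$ sub-streams $s_{i,1},\ldots,s_{i,n}$ with rates $r_{i,1},\ldots,r_{i,n}$ summing to $R_i$. A sub-stream of $s_i$ is broadcast along a rooted spanning tree rooted at $v_i$: each node forwards the sub-stream to each of its children at the sub-stream's rate, so a node with $c$ children uses $c$ times the rate of its uplink, and each non-root node uses the rate of its downlink. The height of a rooted tree is the maximum number of edges on a path from the root to a leaf. *)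

theory Defs
  imports Complex_Main
begin

text \<open>Sites are indexed 0..<n. A rooted spanning tree on the sites with root r is
given by a parent function p: every non-root site v < n has parent p v < n, and
following parents from v eventually reaches the root (so there are no cycles).
Tree edges are (p v, v) for v < n, v \<noteq> r; the value p r is irrelevant.\<close>

definition is_rooted_spanning_tree :: "nat \<Rightarrow> nat \<Rightarrow> (nat \<Rightarrow> nat) \<Rightarrow> bool" where
  "is_rooted_spanning_tree n r p \<longleftrightarrow>
     r < n \<and> (\<forall>v<n. v \<noteq> r \<longrightarrow> p v < n \<and> (\<exists>k. (p ^^ k) v = r))"

definition tree_depth :: "nat \<Rightarrow> (nat \<Rightarrow> nat) \<Rightarrow> nat \<Rightarrow> nat" where
  "tree_depth r p v = (LEAST k. (p ^^ k) v = r)"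

definition tree_height :: "nat \<Rightarrow> nat \<Rightarrow> (nat \<Rightarrow> nat) \<Rightarrow> nat" where
  "tree_height n r p = Max (tree_depth r p ` {..<n})"

definition num_children :: "nat \<Rightarrow> nat \<Rightarrow> (nat \<Rightarrow> nat) \<Rightarrow> nat \<Rightarrow> nat" where
  "num_children n r p u = card {v. v < n \<and> v \<noteq> r \<and> p v = u}"

end

theory Submission
  imports Defs
begin

lemma nc_formula:
  assumes "i < n" "j < n" "k < n"
  shows "num_children n i (\<lambda>v. if v = j \<or> v = i then i else j) k =
    (if j = i then (if k = i then n - 1 else 0)
     else if k = i then 1 else if k = j then n - 2 else 0)"
proof -
  have e: "{v. v < n \<and> v \<noteq> i \<and> (if v = j \<or> v = i then i else j) = k} =
    (if j = i then (if k = i then {..<n} - {i} else {})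
     else if k = i then {j} else if k = j then {..<n} - {i, j} else {})"
    using assms by auto
  show ?thesis unfolding num_children_def e using assms by auto
qed

lemma tree_ok:
  assumes "i < n" "j < n"
  shows "is_rooted_spanning_tree n i (\<lambda>v. if v = j \<or> v = i then i else j) \<and>
         tree_height n i (\<lambda>v. if v = j \<or> v = i then i else j) \<le> 2"
proof -
  let ?p = "\<lambda>v. if v = j \<or> v = i then i else j"
  have two: "(?p ^^ 2) v = i" for v by (simp add: numeral_2_eq_2)
  have "is_rooted_spanning_tree n i ?p"
    unfolding is_rooted_spanning_tree_def using assms two by auto
  moreover have "tree_depth i ?p v \<le> 2" for v
    unfolding tree_depth_def by (rule Least_le) (rule two)
  hence "tree_height n i ?p \<le> 2"
    unfolding tree_height_def using assms by (subst Max_le_iff) auto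
  ultimately show ?thesis by blast
qed

theorem theorem3p1:
  fixes n :: nat and Cu Cd R :: "nat \<Rightarrow> real"
  assumes "n \<ge> 1"
    and "\<forall>k<n. Cu k > 0" and "\<forall>k<n. Cd k > 0" and "\<forall>i<n. R i > 0"
    and "\<forall>i<n. R i \<le> Cu i"
    and "\<forall>i<n. (\<Sum>j\<in>{..<n} - {i}. R j) \<le> Cd i"
    and "(real n - 1) * (\<Sum>i<n. R i) \<le> (\<Sum>i<n. Cu i)"
  shows "\<exists>(r :: nat \<Rightarrow> nat \<Rightarrow> real) (T :: nat \<Rightarrow> nat \<Rightarrow> nat \<Rightarrow> nat).
           (\<forall>i<n. \<forall>j<n. r i j \<ge> 0) \<and>
           (\<forall>i<n. (\<Sum>j<n. r i j) = R i) \<and>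
           (\<forall>i<n. \<forall>j<n. is_rooted_spanning_tree n i (T i j) \<and> tree_height n i (T i j) \<le> 2) \<and>
           (\<forall>k<n. (\<Sum>i<n. \<Sum>j<n. r i j * real (num_children n i (T i j) k)) \<le> Cu k) \<and>
           (\<forall>k<n. (\<Sum>i\<in>{..<n} - {k}. \<Sum>j<n. r i j) \<le> Cd k)"
proof -
  define S where "S = (\<Sum>i<n. R i)"
  define D where "D = (\<Sum>l<n. Cu l - R l)"
  define w where "w k = (if D > 0 then (Cu k - R k) / D else (if k = 0 then 1 else 0))" for k
  define r where "r i j = R i * w j" for i j
  define T where "T i j = (\<lambda>v. if v = j \<or> v = i then i else (j::nat))" for i j
  have Spos: "S > 0" unfolding S_def using assms(1,4)
    by (intro sum_pos) (auto simp: lessThan_empty_iff)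
  have DS: "D \<ge> (real n - 2) * S"
  proof -
    have "D = (\<Sum>l<n. Cu l) - S" unfolding D_def S_def by (simp add: sum_subtractf)
    thus ?thesis using assms(7) unfolding S_def by (simp add: algebra_simps)
  qed
  have wnn: "w k \<ge> 0" if "k < n" for k
    using assms(5) that unfolding w_def by auto
  have wsum: "(\<Sum>k<n. w k) = 1"
  proof (cases "D > 0")
    case True
    then show ?thesis unfolding w_def D_def by (simp add: sum_divide_distrib[symmetric])
  next
    case False
    then have "(\<Sum>k<n. w k) = (\<Sum>k<n. if k = 0 then 1 else 0)" unfolding w_def by simp
    also have "\<dots> = 1" using assms(1) by (simp add: sum.delta)
    finally show ?thesis .
  qed
  have rowsum: "(\<Sum>j<n. r i j) = R i" for i
    unfolding r_def by (simp add: sum_distrib_left[symmetric] wsum)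
  have key: "(real n - 2) * S * w k \<le> Cu k - R k" if "k < n" for k
  proof (cases "D > 0")
    case True
    have "(real n - 2) * S * w k \<le> D * w k"
      using DS wnn[OF that] by (simp add: mult_right_mono)
    also have "\<dots> = Cu k - R k" unfolding w_def using True by simp
    finally show ?thesis .
  next
    case False
    hence "real n - 2 \<le> 0" using DS Spos
      by (smt (verit) mult_pos_pos)
    moreover have "S * w k \<ge> 0" using Spos wnn[OF that] by simp
    ultimately have "(real n - 2) * S * w k \<le> 0"
      by (metis mult.assoc mult_nonpos_nonneg)
    moreover have "R k \<le> Cu k" using assms(5) that by simp
    ultimately show ?thesis by linarith
  qed
  have upl: "(\<Sum>i<n. \<Sum>j<n. r i j * real (num_children n i (T i j) k)) \<le> Cu k"
    if k: "k < n" for k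
  proof (cases "n = 1")
    case True
    then have "k = 0" using k by simp
    moreover have "num_children 1 0 (T 0 0) 0 = 0"
      using nc_formula[of 0 1 0 0] unfolding T_def by simp
    ultimately show ?thesis using True assms(2) k by simp
  next
    case False
    hence n2: "n \<ge> 2" using assms(1) by simp
    define f where "f i j = (if j = i then (if k = i then n - 1 else 0)
     else if k = i then 1 else if k = j then n - 2 else (0::nat))" for i j
    have "(\<Sum>i<n. \<Sum>j<n. r i j * real (num_children n i (T i j) k)) =
          (\<Sum>i<n. \<Sum>j<n. r i j * real (f i j))"
      unfolding T_def f_def using k by (intro sum.cong refl) (simp add: nc_formula)
    also have "\<dots> = (\<Sum>j<n. r k j * real (f k j)) +
        (\<Sum>i\<in>{..<n} - {k}. \<Sum>j<n. r i j * real (f i j))"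
      using k by (subst sum.remove[of _ k]) auto
    also have "(\<Sum>j<n. r k j * real (f k j)) = R k + (real n - 2) * r k k"
    proof -
      have "(\<Sum>j<n. r k j * real (f k j)) = r k k * real (f k k) +
          (\<Sum>j\<in>{..<n} - {k}. r k j * real (f k j))"
        using k by (subst sum.remove[of _ k]) auto
      also have "(\<Sum>j\<in>{..<n} - {k}. r k j * real (f k j)) = (\<Sum>j\<in>{..<n} - {k}. r k j)"
        unfolding f_def by (intro sum.cong) auto
      also have "\<dots> = R k - r k k"
        using rowsum[of k] k by (subst (asm) sum.remove[of _ k]) auto
      finally show ?thesis unfolding f_def using n2 by (simp add: of_nat_diff algebra_simps)
    qed
    also have "(\<Sum>i\<in>{..<n} - {k}. \<Sum>j<n. r i j * real (f i j)) =
        (\<Sum>i\<in>{..<n} - {k}. (real n - 2) * r i k)"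
    proof (intro sum.cong refl)
      fix i assume i: "i \<in> {..<n} - {k}"
      have "(\<Sum>j<n. r i j * real (f i j)) = r i k * real (f i k) +
          (\<Sum>j\<in>{..<n} - {k}. r i j * real (f i j))"
        using k by (subst sum.remove[of _ k]) auto
      also have "(\<Sum>j\<in>{..<n} - {k}. r i j * real (f i j)) = 0"
        using i unfolding f_def by (intro sum.neutral) auto
      finally show "(\<Sum>j<n. r i j * real (f i j)) = (real n - 2) * r i k"
        using i n2 unfolding f_def by (simp add: of_nat_diff)
    qed
    also have "R k + (real n - 2) * r k k + (\<Sum>i\<in>{..<n} - {k}. (real n - 2) * r i k)
        = R k + (real n - 2) * (\<Sum>i<n. r i k)"
      using k by (simp add: sum_distrib_left[symmetric] sum.remove[of "{..<n}" k] distrib_left)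
    also have "(\<Sum>i<n. r i k) = S * w k"
      unfolding r_def S_def by (simp add: sum_distrib_right)
    finally show ?thesis using key[OF k] by (simp add: algebra_simps)
  qed
  show ?thesis
  proof (intro exI[of _ r] exI[of _ T] conjI allI impI)
    fix i j assume "i < n" "j < n"
    thus "r i j \<ge> 0" unfolding r_def using assms(4) wnn
      by (simp add: less_imp_le zero_le_mult_iff)
  next
    fix i assume "i < n" thus "(\<Sum>j<n. r i j) = R i" by (simp add: rowsum)
  next
    fix i j assume "i < n" "j < n"
    thus "is_rooted_spanning_tree n i (T i j)" using tree_ok unfolding T_def by blast
  next
    fix i j assume "i < n" "j < n"
    thus "tree_height n i (T i j) \<le> 2" using tree_ok unfolding T_def by blast
  next
    fix k assume "k < n" thus "(\<Sum>i<n. \<Sum>j<n. r i j * real (num_children n i (T i j) k)) \<le> Cu k"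
      by (rule upl)
  next
    fix k assume "k < n"
    thus "(\<Sum>i\<in>{..<n} - {k}. \<Sum>j<n. r i j) \<le> Cd k" using assms(6) by (simp add: rowsum)
  qed
qed

end
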